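(* Let $f(x_1,x_2)=(-2+x_1+x_2)^2$ and $g(x_1,x_2)=1-x_1^2-x_2^2$; the global minimum of $f$ on $\{x: g(x)\geqslant 0\}$ is $2(3-2\sqrt{2})$. For every integer $d\geqslant 1$, the optimal value of the order-$d$ DSOS relaxation $$\sup_{\lambda,\sigma_0,\sigma_1}\lambda\quad\text{s.t.}\quad f-\lambda=\sigma_0+\sigma_1 g,\ \sigma_0\in\mathrm{DSOS}_d,\ \sigma_1\in\mathrm{DSOS}_{d-1}$$ is at most $4(1-\sqrt{2})$; in particular its gap to the global minimum is at least $2$ at every order, and the DSOS hierarchy does not converge to the global minimum.
   Context: For $\alpha\in\mathbb{N}^2$ write $x^\alpha=x_1^{\alpha_1}x_2^{\alpha_2}$ and $|\alpha|=\alpha_1+\alpha_2$. $\mathrm{DSOS}_d$ denotes the set of finite nonnegative combinations of polynomials of the forms $(x^\alpha)^2$, $(x^\alpha+x^\beta)^2$, $(x^\alpha-x^\beta)^2$ with $|\alpha|,|\beta|\leqslant d$ (diagonally-dominant sums of squares). *)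

theory Defs
  imports Complex_Main
begin

text \<open>Polynomials in two real variables are represented by the functions they
induce on real \<times> real (over an infinite field this is faithful).\<close>

definition monom2 :: "nat \<times> nat \<Rightarrow> real \<times> real \<Rightarrow> real" where
  "monom2 a x = fst x ^ fst a * snd x ^ snd a"

definition deg2 :: "nat \<times> nat \<Rightarrow> nat" where
  "deg2 a = fst a + snd a"

inductive_set DSOS :: "nat \<Rightarrow> (real \<times> real \<Rightarrow> real) set" for d :: nat where
  zero: "(\<lambda>x. 0) \<in> DSOS d"
| sq: "\<lbrakk>p \<in> DSOS d; c \<ge> 0; deg2 a \<le> d\<rbrakk>
        \<Longrightarrow> (\<lambda>x. p x + c * (monom2 a x)^2) \<in> DSOS d"
| plus: "\<lbrakk>p \<in> DSOS d; c \<ge> 0; deg2 a \<le> d; deg2 b \<le> d\<rbrakk>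
        \<Longrightarrow> (\<lambda>x. p x + c * (monom2 a x + monom2 b x)^2) \<in> DSOS d"
| minus: "\<lbrakk>p \<in> DSOS d; c \<ge> 0; deg2 a \<le> d; deg2 b \<le> d\<rbrakk>
        \<Longrightarrow> (\<lambda>x. p x + c * (monom2 a x - monom2 b x)^2) \<in> DSOS d"

definition f5 :: "real \<times> real \<Rightarrow> real" where
  "f5 x = (-2 + fst x + snd x)^2"

definition g5 :: "real \<times> real \<Rightarrow> real" where
  "g5 x = 1 - (fst x)^2 - (snd x)^2"

definition dsos_feasible :: "nat \<Rightarrow> real \<Rightarrow> bool" where
  "dsos_feasible d lam \<longleftrightarrow> (\<exists>\<sigma>0 \<sigma>1. \<sigma>0 \<in> DSOS d \<and> \<sigma>1 \<in> DSOS (d - 1) \<and>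
      (\<forall>x. f5 x - lam = \<sigma>0 x + \<sigma>1 x * g5 x))"

end

theory Submission
  imports Defs
begin

definition rr :: real where "rr = sqrt 2 / 2"

lemma rr_sq: "rr^2 = 1/2"
  by (simp add: rr_def power_divide)

definition LL :: "(real \<times> real \<Rightarrow> real) \<Rightarrow> real" where
  "LL p = (p (rr, rr) + p (-rr, rr) + p (rr, -rr) - p (-rr, -rr)) / 2"

lemma monom_pt:
  "monom2 a (e1 * rr, e2 * rr) = e1 ^ fst a * e2 ^ snd a * rr ^ deg2 a"
  by (simp add: monom2_def deg2_def power_mult_distrib power_add)

lemma key2:
  fixes A B s x1 y1 x2 y2 :: real
  assumes "s = 1 \<or> s = -1" "x1 = 1 \<or> x1 = -1" "y1 = 1 \<or> y1 = -1" "x2 = 1 \<or> x2 = -1" "y2 = 1 \<or> y2 = -1"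
  shows "((A + s*B)^2 + (x1*A + s*(y1*B))^2 + (x2*A + s*(y2*B))^2 - (x1*x2*A + s*(y1*y2*B))^2) / 2 \<ge> 0"
proof -
  have h: "0 \<le> A*A - 2*A*B + B*B" "0 \<le> A*A + 2*A*B + B*B"
    using zero_le_power2[of "A-B"] zero_le_power2[of "A+B"] by (simp_all add: power2_eq_square algebra_simps)
  show ?thesis using assms h
    by (elim disjE) (simp_all add: power2_eq_square algebra_simps)
qed

lemma neg1_pow: "((-1::real) ^ n = 1) \<or> ((-1::real) ^ n = -1)"
  by (cases "even n") auto

lemma LL_sq:
  assumes "s = 1 \<or> s = -1"
  shows "LL (\<lambda>x. (monom2 a x + s * monom2 b x)^2) \<ge> 0"
proof -
  have p1: "monom2 c (rr, rr) = rr ^ deg2 c" for c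
    using monom_pt[of c 1 1] by simp
  have p2: "monom2 c (-rr, rr) = (-1)^fst c * rr ^ deg2 c" for c
    using monom_pt[of c "-1" 1] by simp
  have p3: "monom2 c (rr, -rr) = (-1)^snd c * rr ^ deg2 c" for c
    using monom_pt[of c 1 "-1"] by simp
  have p4: "monom2 c (-rr, -rr) = (-1)^fst c * (-1)^snd c * rr ^ deg2 c" for c
    using monom_pt[of c "-1" "-1"] by simp
  have "((rr ^ deg2 a + s*rr ^ deg2 b)^2 + ((-1)^fst a*rr ^ deg2 a + s*((-1)^fst b*rr ^ deg2 b))^2
     + ((-1)^snd a*rr ^ deg2 a + s*((-1)^snd b*rr ^ deg2 b))^2
     - ((-1)^fst a*(-1)^snd a*rr ^ deg2 a + s*((-1)^fst b*(-1)^snd b*rr ^ deg2 b))^2) / 2 \<ge> 0"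
    by (rule key2) (auto simp: assms neg1_pow)
  then show ?thesis
    unfolding LL_def p1 p2 p3 p4 by (simp add: mult.assoc)
qed

lemma LL_lin: "LL (\<lambda>x. p x + c * q x) = LL p + c * LL q"
  by (simp add: LL_def algebra_simps add_divide_distrib diff_divide_distrib)

lemma LL_DSOS: "p \<in> DSOS d \<Longrightarrow> LL p \<ge> 0"
proof (induction rule: DSOS.induct)
  case zero
  then show ?case by (simp add: LL_def)
next
  case (sq p c a)
  have "LL (\<lambda>x. (monom2 a x + 1 * monom2 a x)^2) \<ge> 0"
    by (rule LL_sq) simp
  then have "LL (\<lambda>x. (monom2 a x)^2) \<ge> 0" by (simp add: LL_def power2_eq_square algebra_simps)
  then show ?case using sq by (simp add: LL_lin)
next
  case (plus p c a b)
  have "LL (\<lambda>x. (monom2 a x + 1 * monom2 b x)^2) \<ge> 0"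
    by (rule LL_sq) simp
  then show ?case using plus by (simp add: LL_lin)
next
  case (minus p c a b)
  have "LL (\<lambda>x. (monom2 a x + (-1) * monom2 b x)^2) \<ge> 0"
    by (rule LL_sq) simp
  then show ?case using minus by (simp add: LL_lin)
qed

theorem mainTheorem5:
  shows "(\<forall>x. g5 x \<ge> 0 \<longrightarrow> f5 x \<ge> 2 * (3 - 2 * sqrt 2))
       \<and> (\<exists>x. g5 x \<ge> 0 \<and> f5 x = 2 * (3 - 2 * sqrt 2))
       \<and> (\<forall>d::nat. d \<ge> 1 \<longrightarrow> (\<forall>lam. dsos_feasible d lam \<longrightarrow> lam \<le> 4 * (1 - sqrt 2)))"
proof (intro conjI allI impI)
  have s2: "sqrt 2 * sqrt 2 = (2::real)" by simp
  have rrs: "rr * rr = 1/2" using rr_sq by (simp add: power2_eq_square)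
  fix x :: "real \<times> real"
  assume g: "g5 x \<ge> 0"
  obtain a b where x: "x = (a, b)" by (cases x)
  have "(a+b)^2 \<le> 2" using g zero_le_power2[of "a-b"]
    by (simp add: g5_def x power2_eq_square algebra_simps)
  then have "sqrt ((a+b)^2) \<le> sqrt 2" using real_sqrt_le_mono by blast
  then have ab: "a + b \<le> sqrt 2" by simp
  have "sqrt 2 \<le> 2" using real_sqrt_le_mono[of 2 4] by simp
  then have "(2 - sqrt 2)^2 \<le> (2 - a - b)^2"
    using ab by (intro power_mono) auto
  then show "f5 x \<ge> 2 * (3 - 2 * sqrt 2)"
    by (simp add: f5_def x power2_eq_square algebra_simps s2)
next
  have s2: "sqrt 2 * sqrt 2 = (2::real)" by simp
  have rrs: "rr * rr = 1/2" using rr_sq by (simp add: power2_eq_square)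
  show "\<exists>x. g5 x \<ge> 0 \<and> f5 x = 2 * (3 - 2 * sqrt 2)"
    by (rule exI[of _ "(rr, rr)"])
       (simp add: g5_def f5_def power2_eq_square rrs algebra_simps rr_def s2)
next
  have s2: "sqrt 2 * sqrt 2 = (2::real)" by simp
  have rrs: "rr * rr = 1/2" using rr_sq by (simp add: power2_eq_square)
  fix d :: nat and lam :: real
  assume "dsos_feasible d lam"
  then obtain \<sigma>0 \<sigma>1 where h0: "\<sigma>0 \<in> DSOS d" and h1: "\<sigma>1 \<in> DSOS (d - 1)"
    and eq: "\<forall>x. f5 x - lam = \<sigma>0 x + \<sigma>1 x * g5 x"
    unfolding dsos_feasible_def by blast
  have gz: "g5 (rr, rr) = 0" "g5 (-rr, rr) = 0" "g5 (rr, -rr) = 0" "g5 (-rr, -rr) = 0"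
    by (simp_all add: g5_def power2_eq_square rrs)
  have "LL (\<lambda>x. f5 x - lam) = LL \<sigma>0"
    using eq unfolding LL_def by (simp add: gz)
  moreover have "LL (\<lambda>x. f5 x - lam) = 4 * (1 - sqrt 2) - lam"
    unfolding LL_def by (simp add: f5_def power2_eq_square algebra_simps rrs rr_def s2 field_simps)
  ultimately show "lam \<le> 4 * (1 - sqrt 2)" using LL_DSOS[OF h0] by linarith
qed

end
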